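(* Let $\mathcal{C}=(\mathcal{T},\mathcal{I},\mathcal{R})$ be an extraction context with thresholds \textit{minsupp} and \textit{minbond}. Then $\mathcal{M}in\mathcal{MM}ax\mathcal{CR}=\mathcal{M}ax\mathcal{CRCP}\cup\mathcal{M}in\mathcal{MRCP}$, with each element $J$ recorded together with $\mathit{Supp}(\wedge J)$ and $\mathit{bond}(J)$, is an approximate concise representation of the set $\mathcal{RCP}$ of rare correlated patterns; that is, for every pattern $I\subseteq\mathcal{I}$, the recorded data alone suffice to decide whether $I\in\mathcal{RCP}$.
   Context: An extraction context is a triple $\mathcal{C}=(\mathcal{T},\mathcal{I},\mathcal{R})$ with $\mathcal{T}$ a finite set of transactions, $\mathcal{I}$ a finite set of items and $\mathcal{R}\subseteq\mathcal{T}\times\mathcal{I}$. For a pattern $I\subseteq\mathcal{I}$: $\mathit{Supp}(\wedge I)=|\{t:\forall i\in I,(t,i)\in\mathcal{R}\}|$, $\mathit{Supp}(\vee I)=|\{t:\exists i\in I,(t,i)\in\mathcal{R}\}|$, and for nonempty $I$, $\mathit{bond}(I)=\mathit{Supp}(\wedge I)/\mathit{Supp}(\vee I)$ (with $\mathit{bond}(\emptyset)=+\infty$ by convention). $\mathcal{CP}=\{I:\mathit{bond}(I)\ge\textit{minbond}\}$; $\mathcal{RCP}=\{I\in\mathcal{CP}:\mathit{Supp}(\wedge I)<\textit{minsupp}\}$. $\mathcal{CRCP}=\{I\in\mathcal{RCP}:\forall I_1\supsetneq I,\ \mathit{bond}(I)>\mathit{bond}(I_1)\}$; $\mathcal{MRCP}=\{I\in\mathcal{RCP}:\forall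 I_1\subsetneq I,\ \mathit{bond}(I)<\mathit{bond}(I_1)\}$. $\mathcal{M}ax\mathcal{CP}=\{I\in\mathcal{CP}:\forall I_1\supsetneq I,\ \mathit{bond}(I_1)<\textit{minbond}\}$ and $\mathcal{M}ax\mathcal{CRCP}=\mathcal{CRCP}\cap\mathcal{M}ax\mathcal{CP}$. $\mathcal{M}in\mathcal{RP}$ is the set of patterns $I$ with $\mathit{Supp}(\wedge I)<\textit{minsupp}$ whose proper subsets all have conjunctive support $\ge\textit{minsupp}$, and $\mathcal{M}in\mathcal{MRCP}=\mathcal{MRCP}\cap\mathcal{M}in\mathcal{RP}$. *)

theory Defs
  imports Complex_Main "HOL-Library.Extended_Real"
begin

definition extraction_context :: "'t set \<Rightarrow> 'i set \<Rightarrow> ('t \<times> 'i) set \<Rightarrow> bool" where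
  "extraction_context T Its R \<longleftrightarrow> finite T \<and> finite Its \<and> R \<subseteq> T \<times> Its"

definition supp_conj :: "'t set \<Rightarrow> ('t \<times> 'i) set \<Rightarrow> 'i set \<Rightarrow> nat" where
  "supp_conj T R I = card {t \<in> T. \<forall>i\<in>I. (t, i) \<in> R}"

definition supp_disj :: "'t set \<Rightarrow> ('t \<times> 'i) set \<Rightarrow> 'i set \<Rightarrow> nat" where
  "supp_disj T R I = card {t \<in> T. \<exists>i\<in>I. (t, i) \<in> R}"

text \<open>bond(empty) = +infinity; otherwise the ratio (with the HOL convention x/0 = 0).\<close>
definition bond :: "'t set \<Rightarrow> ('t \<times> 'i) set \<Rightarrow> 'i set \<Rightarrow> ereal" where
  "bond T R I = (if I = {} then \<infinity>
     else ereal (real (supp_conj T R I) / real (supp_disj T R I)))"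

definition CP :: "'t set \<Rightarrow> 'i set \<Rightarrow> ('t \<times> 'i) set \<Rightarrow> real \<Rightarrow> 'i set set" where
  "CP T Its R minbond = {I. I \<subseteq> Its \<and> bond T R I \<ge> ereal minbond}"

definition RCP :: "'t set \<Rightarrow> 'i set \<Rightarrow> ('t \<times> 'i) set \<Rightarrow> nat \<Rightarrow> real \<Rightarrow> 'i set set" where
  "RCP T Its R minsupp minbond = {I \<in> CP T Its R minbond. supp_conj T R I < minsupp}"

definition CRCP :: "'t set \<Rightarrow> 'i set \<Rightarrow> ('t \<times> 'i) set \<Rightarrow> nat \<Rightarrow> real \<Rightarrow> 'i set set" where
  "CRCP T Its R minsupp minbond = {I \<in> RCP T Its R minsupp minbond.
     \<forall>I1. I \<subset> I1 \<and> I1 \<subseteq> Its \<longrightarrow> bond T R I > bond T R I1}"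

definition MRCP :: "'t set \<Rightarrow> 'i set \<Rightarrow> ('t \<times> 'i) set \<Rightarrow> nat \<Rightarrow> real \<Rightarrow> 'i set set" where
  "MRCP T Its R minsupp minbond = {I \<in> RCP T Its R minsupp minbond.
     \<forall>I1. I1 \<subset> I \<longrightarrow> bond T R I < bond T R I1}"

definition MaxCP :: "'t set \<Rightarrow> 'i set \<Rightarrow> ('t \<times> 'i) set \<Rightarrow> real \<Rightarrow> 'i set set" where
  "MaxCP T Its R minbond = {I \<in> CP T Its R minbond.
     \<forall>I1. I \<subset> I1 \<and> I1 \<subseteq> Its \<longrightarrow> bond T R I1 < ereal minbond}"

definition MaxCRCP :: "'t set \<Rightarrow> 'i set \<Rightarrow> ('t \<times> 'i) set \<Rightarrow> nat \<Rightarrow> real \<Rightarrow> 'i set set" where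
  "MaxCRCP T Its R minsupp minbond = CRCP T Its R minsupp minbond \<inter> MaxCP T Its R minbond"

definition MinRP :: "'t set \<Rightarrow> 'i set \<Rightarrow> ('t \<times> 'i) set \<Rightarrow> nat \<Rightarrow> 'i set set" where
  "MinRP T Its R minsupp = {I. I \<subseteq> Its \<and> supp_conj T R I < minsupp \<and>
     (\<forall>I1. I1 \<subset> I \<longrightarrow> supp_conj T R I1 \<ge> minsupp)}"

definition MinMRCP :: "'t set \<Rightarrow> 'i set \<Rightarrow> ('t \<times> 'i) set \<Rightarrow> nat \<Rightarrow> real \<Rightarrow> 'i set set" where
  "MinMRCP T Its R minsupp minbond = MRCP T Its R minsupp minbond \<inter> MinRP T Its R minsupp"

definition MinMMaxCR :: "'t set \<Rightarrow> 'i set \<Rightarrow> ('t \<times> 'i) set \<Rightarrow> nat \<Rightarrow> real \<Rightarrow> ('i set \<times> nat \<times> ereal) set" where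
  "MinMMaxCR T Its R minsupp minbond =
     (\<lambda>J. (J, supp_conj T R J, bond T R J)) `
       (MaxCRCP T Its R minsupp minbond \<union> MinMRCP T Its R minsupp minbond)"

end

theory Submission
  imports Defs
begin

lemma conj_anti:
  assumes "finite T" "I \<subseteq> J" shows "supp_conj T R J \<le> supp_conj T R I"
  unfolding supp_conj_def using assms by (intro card_mono) auto

lemma disj_mono:
  assumes "finite T" "I \<subseteq> J" shows "supp_disj T R I \<le> supp_disj T R J"
  unfolding supp_disj_def using assms by (intro card_mono) auto

lemma conj_le_disj:
  assumes "finite T" "I \<noteq> {}" shows "supp_conj T R I \<le> supp_disj T R I"
  unfolding supp_conj_def supp_disj_def using assms by (intro card_mono) auto

lemma bond_anti:
  assumes "finite T" "I \<subseteq> J" shows "bond T R J \<le> bond T R I"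
proof (cases "I = {}")
  case True then show ?thesis by (simp add: bond_def)
next
  case False
  then have J: "J \<noteq> {}" using assms by auto
  have c: "supp_conj T R J \<le> supp_conj T R I" using conj_anti[OF assms] .
  have d: "supp_disj T R I \<le> supp_disj T R J" using disj_mono[OF assms] .
  have cd: "supp_conj T R I \<le> supp_disj T R I" using conj_le_disj[OF assms(1) False] .
  show ?thesis
  proof (cases "supp_disj T R I = 0")
    case True
    then have "supp_conj T R J = 0" using c cd by simp
    then show ?thesis using False J True by (simp add: bond_def)
  next
    case nz: False
    have "real (supp_conj T R J) / real (supp_disj T R J)
          \<le> real (supp_conj T R I) / real (supp_disj T R I)"
    proof (rule frac_le)
      show "0 \<le> real (supp_conj T R I)" by simp
      show "real (supp_conj T R J) \<le> real (supp_conj T R I)" using c by simp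
      show "0 < real (supp_disj T R I)" using nz by simp
      show "real (supp_disj T R I) \<le> real (supp_disj T R J)" using d by simp
    qed
    then show ?thesis using False J by (simp add: bond_def)
  qed
qed

lemma bond_strict:
  assumes "finite T" "I1 \<subseteq> K" "I1 \<noteq> {}" "supp_conj T R K < supp_conj T R I1"
  shows "bond T R K < bond T R I1"
proof -
  have K: "K \<noteq> {}" using assms by auto
  have d: "supp_disj T R I1 \<le> supp_disj T R K" using disj_mono[OF assms(1,2)] .
  have cd: "supp_conj T R I1 \<le> supp_disj T R I1" using conj_le_disj[OF assms(1,3)] .
  have "real (supp_conj T R K) / real (supp_disj T R K)
          < real (supp_conj T R I1) / real (supp_disj T R I1)"
  proof (rule frac_less)
    show "0 \<le> real (supp_conj T R K)" by simp
    show "real (supp_conj T R K) < real (supp_conj T R I1)" using assms(4) by simp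
    show "0 < real (supp_disj T R I1)" using assms(4) cd by simp
    show "real (supp_disj T R I1) \<le> real (supp_disj T R K)" using d by simp
  qed
  then show ?thesis using assms(3) K by (simp add: bond_def)
qed

lemma char:
  assumes ctx: "extraction_context T Its R" and I: "I \<subseteq> Its"
  shows "I \<in> RCP T Its R minsupp minbond \<longleftrightarrow>
    (\<exists>J\<in>fst ` MinMMaxCR T Its R minsupp minbond. I \<subseteq> J) \<and>
    (\<exists>K\<in>fst ` MinMMaxCR T Its R minsupp minbond. K \<subseteq> I)"
proof -
  have fT: "finite T" and fI: "finite Its" using ctx by (auto simp: extraction_context_def)
  have U: "fst ` MinMMaxCR T Its R minsupp minbond =
     MaxCRCP T Its R minsupp minbond \<union> MinMRCP T Its R minsupp minbond"
    unfolding MinMMaxCR_def by (simp add: image_image)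
  have sub: "MaxCRCP T Its R minsupp minbond \<union> MinMRCP T Its R minsupp minbond
      \<subseteq> RCP T Its R minsupp minbond"
    by (auto simp: MaxCRCP_def MinMRCP_def CRCP_def MRCP_def)
  show ?thesis
  proof
    assume r: "I \<in> RCP T Its R minsupp minbond"
    then have Icp: "bond T R I \<ge> ereal minbond" and Is: "supp_conj T R I < minsupp"
      by (auto simp: RCP_def CP_def)
    define A where "A = {J. I \<subseteq> J \<and> J \<in> CP T Its R minbond}"
    have "finite A" unfolding A_def CP_def using fI
      by (rule finite_subset[rotated, OF finite_Collect_subsets]) auto
    moreover have "I \<in> A" using r by (auto simp: A_def RCP_def)
    ultimately obtain J where J: "J \<in> A" "I \<subseteq> J" and mx: "\<forall>b\<in>A. J \<le> b \<longrightarrow> J = b"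
      using finite_has_maximal2 by blast
    have Jcp: "J \<in> CP T Its R minbond" using J by (auto simp: A_def)
    have Jmax: "\<forall>I1. J \<subset> I1 \<and> I1 \<subseteq> Its \<longrightarrow> bond T R I1 < ereal minbond"
    proof (intro allI impI)
      fix I1 assume a: "J \<subset> I1 \<and> I1 \<subseteq> Its"
      show "bond T R I1 < ereal minbond"
      proof (rule ccontr)
        assume "\<not> ?thesis"
        then have "I1 \<in> A" using a J by (auto simp: A_def CP_def)
        then show False using mx a by auto
      qed
    qed
    have Jr: "J \<in> RCP T Its R minsupp minbond"
      using Jcp conj_anti[OF fT J(2), of R] Is by (auto simp: RCP_def)
    have "J \<in> MaxCRCP T Its R minsupp minbond"
      unfolding MaxCRCP_def CRCP_def MaxCP_def
    proof (intro IntI CollectI conjI allI impI)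
      show "J \<in> RCP T Its R minsupp minbond" by fact
      show "J \<in> CP T Its R minbond" by fact
      fix I1 assume a: "J \<subset> I1 \<and> I1 \<subseteq> Its"
      show "bond T R I1 < ereal minbond" using Jmax a by blast
      then show "bond T R I1 < bond T R J" using Jcp by (auto simp: CP_def)
    qed
    then have e1: "\<exists>J\<in>fst ` MinMMaxCR T Its R minsupp minbond. I \<subseteq> J" using U J by auto
    define B where "B = {K. K \<subseteq> I \<and> supp_conj T R K < minsupp}"
    have "finite B" unfolding B_def using finite_subset[OF I fI]
      by (rule finite_subset[rotated, OF finite_Collect_subsets]) auto
    moreover have "I \<in> B" using Is by (auto simp: B_def)
    ultimately have "\<exists>m\<in>B. m \<le> I \<and> (\<forall>b\<in>B. b \<le> m \<longrightarrow> m = b)"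
      by (rule finite_has_minimal2)
    then obtain K where K: "K \<in> B" and mn0: "K \<le> I \<and> (\<forall>b\<in>B. b \<le> K \<longrightarrow> K = b)" ..
    have mn: "\<forall>b\<in>B. b \<le> K \<longrightarrow> K = b" using mn0 by (rule conjunct2)
    have KI: "K \<subseteq> I" and Ks: "supp_conj T R K < minsupp" using K by (auto simp: B_def)
    have Kmin: "\<forall>I1. I1 \<subset> K \<longrightarrow> supp_conj T R I1 \<ge> minsupp"
    proof (intro allI impI)
      fix I1 assume a: "I1 \<subset> K"
      show "supp_conj T R I1 \<ge> minsupp"
      proof (rule ccontr)
        assume "\<not> ?thesis"
        then have "I1 \<in> B" using a KI by (auto simp: B_def)
        then show False using mn a by auto
      qed
    qed
    have Kcp: "K \<in> CP T Its R minbond"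
      using bond_anti[OF fT KI, of R] Icp KI I by (auto simp: CP_def)
    have "K \<in> MinMRCP T Its R minsupp minbond"
      unfolding MinMRCP_def MRCP_def MinRP_def RCP_def
    proof (intro IntI CollectI conjI allI impI)
      show "K \<in> CP T Its R minbond" by fact
      show "supp_conj T R K < minsupp" by fact
      show "supp_conj T R K < minsupp" by fact
      show "K \<subseteq> Its" using KI I by auto
      fix I1 assume a: "I1 \<subset> K"
      show "minsupp \<le> supp_conj T R I1" using Kmin a by blast
      show "bond T R K < bond T R I1"
      proof (cases "I1 = {}")
        case True
        then have "K \<noteq> {}" using a by auto
        then show ?thesis using True by (simp add: bond_def)
      next
        case False
        show ?thesis
        proof (rule bond_strict[OF fT])
          show "I1 \<subseteq> K" using a by (rule psubset_imp_subset)
          show "I1 \<noteq> {}" by fact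
          have "minsupp \<le> supp_conj T R I1" using Kmin a by blast
          then show "supp_conj T R K < supp_conj T R I1" using Ks by linarith
        qed
      qed
    qed
    then have "\<exists>K\<in>fst ` MinMMaxCR T Its R minsupp minbond. K \<subseteq> I" using U KI by auto
    with e1 show "(\<exists>J\<in>fst ` MinMMaxCR T Its R minsupp minbond. I \<subseteq> J) \<and>
      (\<exists>K\<in>fst ` MinMMaxCR T Its R minsupp minbond. K \<subseteq> I)" by blast
  next
    assume "(\<exists>J\<in>fst ` MinMMaxCR T Its R minsupp minbond. I \<subseteq> J) \<and>
      (\<exists>K\<in>fst ` MinMMaxCR T Its R minsupp minbond. K \<subseteq> I)"
    then obtain J K where J: "J \<in> RCP T Its R minsupp minbond" "I \<subseteq> J"
      and K: "K \<in> RCP T Its R minsupp minbond" "K \<subseteq> I"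
      using U sub by blast
    have "bond T R J \<le> bond T R I" using bond_anti[OF fT J(2)] .
    moreover have "supp_conj T R I \<le> supp_conj T R K" using conj_anti[OF fT K(2)] .
    ultimately show "I \<in> RCP T Its R minsupp minbond"
    proof -
      have "ereal minbond \<le> bond T R J" using J(1) by (simp add: RCP_def CP_def)
      moreover have "supp_conj T R K < minsupp" using K(1) by (simp add: RCP_def)
      ultimately have "ereal minbond \<le> bond T R I" "supp_conj T R I < minsupp"
        using \<open>bond T R J \<le> bond T R I\<close> \<open>supp_conj T R I \<le> supp_conj T R K\<close>
        by (auto intro: order.trans)
      then show ?thesis using I by (simp add: RCP_def CP_def)
    qed
  qed
qed

theorem mainTheorem8:
  fixes T1 :: "'t set" and R1 :: "('t \<times> 'i) set"
    and T2 :: "'u set" and R2 :: "('u \<times> 'i) set"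
    and Its :: "'i set" and minsupp :: nat and minbond :: real
  assumes "extraction_context T1 Its R1"
    and "extraction_context T2 Its R2"
    and "MinMMaxCR T1 Its R1 minsupp minbond = MinMMaxCR T2 Its R2 minsupp minbond"
  shows "\<forall>I. I \<subseteq> Its \<longrightarrow>
           (I \<in> RCP T1 Its R1 minsupp minbond \<longleftrightarrow> I \<in> RCP T2 Its R2 minsupp minbond)"
proof (intro allI impI)
  fix I assume I: "I \<subseteq> Its"
  show "I \<in> RCP T1 Its R1 minsupp minbond \<longleftrightarrow> I \<in> RCP T2 Its R2 minsupp minbond"
    unfolding char[OF assms(1) I] char[OF assms(2) I] assms(3) ..
qed

end
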